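(* Let $N\ge 2$ be an integer. For $k\in\mathbb{Z}$ let $D_k$ be the column vector of length $N$ whose $i$-th entry ($i=1,\dots,N$, from the top) is $p_{2(N-i)+1}(y,q^kz)$, and let $D'_k$ be the column vector whose $i$-th entry is $q^{2(N-i)+1}p_{2(N-i)+1}(y/q,q^kz)$. Then $$\det[D_{N-1},D_{N-2},\dots,D_1,D_0]=(q-1)^{\frac{N(N-1)}2}z^{\frac{N(N-1)}2}q^{\frac{(N-2)(N-1)N}6}\phi_N(y,z),$$ $$\det[D_{N-1},\dots,D_2,D_1,D'_0]=(-1)^{N-1}(q-1)^{\frac{N(N-1)}2}z^{\frac{(N-1)(N-2)}2}q^{\frac{N(N^2+5)}6}\phi_N(y/q,z),$$ $$\det[D_{N-1},\dots,D_2,D_1,D'_1]=(-1)^{N-1}(q-1)^{\frac{N(N-1)}2}z^{\frac{(N-1)(N-2)}2}q^{\frac{N(N^2+5)}6}(1+qz)\,\phi_N(y/q,z).$$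
   Context: $q$ is a fixed nonzero complex constant that is not a root of unity; $y,z$ are variables. For $k\in\mathbb{Z}$ the polynomials $p_k(y,z)$ are defined by the generating function $\sum_{n\ge 0}p_n(y,z)t^n=\frac{(-(1-q)t;q)_\infty}{((1-q)yt;q)_\infty((1-q)zt;q)_\infty}$, with $(a;q)_\infty=\prod_{i\ge0}(1-aq^i)$, and $p_k=0$ for $k<0$; equivalently $p_n(y,z)=(1-q)^n\sum_{a+b+c=n}\frac{y^a z^b q^{c(c-1)/2}}{(q;q)_a(q;q)_b(q;q)_c}$ with $(q;q)_m=\prod_{j=1}^m(1-q^j)$. For $N>0$, $\phi_N(y,z)=\det\big(p_{N-2i+j+1}(y,z)\big)_{i,j=1}^N$. *)

theory Defs
  imports Complex_Main "Jordan_Normal_Form.Determinant"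
begin

definition qpoch :: "complex \<Rightarrow> nat \<Rightarrow> complex" where
  "qpoch q m = (\<Prod>j=1..m. (1 - q ^ j))"

definition pnat :: "complex \<Rightarrow> nat \<Rightarrow> complex \<Rightarrow> complex \<Rightarrow> complex" where
  "pnat q n y z = (1 - q) ^ n *
     (\<Sum>a\<le>n. \<Sum>b\<le>n - a.
        y ^ a * z ^ b * q ^ ((n - a - b) * (n - a - b - 1) div 2)
        / (qpoch q a * qpoch q b * qpoch q (n - a - b)))"

definition p :: "complex \<Rightarrow> int \<Rightarrow> complex \<Rightarrow> complex \<Rightarrow> complex" where
  "p q k y z = (if k < 0 then 0 else pnat q (nat k) y z)"

text \<open>phi_N(y,z) = det (p_{N-2i+j+1}(y,z))_{i,j=1}^N; with 0-based indices i', j'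
  the entry is p_{N - 2 i' + j'}.\<close>
definition phi :: "complex \<Rightarrow> nat \<Rightarrow> complex \<Rightarrow> complex \<Rightarrow> complex" where
  "phi q N y z = det (mat N N (\<lambda>(i, j). p q (int N - 2 * int i + int j) y z))"

end

theory Submission
  imports Defs "HOL-Computational_Algebra.Formal_Power_Series"
begin


definition qe :: "complex \<Rightarrow> complex \<Rightarrow> complex fps" where
  "qe q x = Abs_fps (\<lambda>n. x^n / qpoch q n)"
definition qg :: "complex \<Rightarrow> complex fps" where
  "qg q = Abs_fps (\<lambda>n. q^(n*(n-1) div 2) / qpoch q n)"
definition sc :: "complex \<Rightarrow> complex fps \<Rightarrow> complex fps" where
  "sc c f = Abs_fps (\<lambda>n. c^n * fps_nth f n)"
definition Psi :: "complex \<Rightarrow> complex \<Rightarrow> complex \<Rightarrow> complex fps" where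
  "Psi q y z = sc (1-q) (qe q y * (qe q z * qg q))"
definition cf :: "complex fps \<Rightarrow> int \<Rightarrow> complex" where
  "cf F m = (if m < 0 then 0 else fps_nth F (nat m))"

lemma p_eq: "p q m y z = cf (Psi q y z) m"
proof (cases "m < 0")
  case True thus ?thesis by (simp add: p_def cf_def)
next
  case False
  have "pnat q n y z = fps_nth (Psi q y z) n" for n
    unfolding pnat_def Psi_def sc_def qe_def qg_def
    by (simp add: fps_mult_nth atMost_atLeast0 sum_distrib_left mult_ac diff_diff_add)
  thus ?thesis using False by (simp add: p_def cf_def)
qed

lemma sc_mult: "sc c (f * g) = sc c f * sc c g"
  unfolding sc_def
  by (rule fps_ext) (simp add: fps_mult_nth sum_distrib_left mult_ac power_add[symmetric])

lemma qpoch_Suc: "qpoch q (Suc m) = qpoch q m * (1 - q ^ Suc m)"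
  unfolding qpoch_def by simp

lemma qpoch_nz: assumes qnr: "\<forall>n::nat. n > 0 \<longrightarrow> q ^ n \<noteq> 1" shows "qpoch q m \<noteq> 0"
  unfolding qpoch_def using qnr by (auto simp: prod_zero_iff)

lemma fps_nth_mult_lin: fixes f :: "complex fps" shows "fps_nth (f * (1 - fps_const c * fps_X)) j
   = fps_nth f j - (if j = 0 then 0 else c * fps_nth f (j - 1))"
proof -
  have "f * (1 - fps_const c * fps_X) = f - fps_const c * (fps_X * f)"
    by (simp add: right_diff_distrib ac_simps)
  thus ?thesis by simp
qed

lemma fps_nth_mult_lin2: fixes f :: "complex fps" shows "fps_nth (f * (1 + fps_const c * fps_X)) j
   = fps_nth f j + (if j = 0 then 0 else c * fps_nth f (j - 1))"
proof -
  have "f * (1 + fps_const c * fps_X) = f + fps_const c * (fps_X * f)"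
    by (simp add: distrib_left ac_simps)
  thus ?thesis by simp
qed

lemma qe_shift:
  assumes qnr: "\<forall>n::nat. n > 0 \<longrightarrow> q ^ n \<noteq> 1"
  shows "qe q (q * w) = qe q w * (1 - fps_const w * fps_X)"
proof (rule fps_ext)
  fix n
  show "fps_nth (qe q (q * w)) n = fps_nth (qe q w * (1 - fps_const w * fps_X)) n"
  proof (cases n)
    case 0 thus ?thesis by (simp add: qe_def fps_nth_mult_lin qpoch_def)
  next
    case (Suc m)
    have nz: "qpoch q m \<noteq> 0" "1 - q ^ Suc m \<noteq> 0" using qpoch_nz[OF qnr] qnr by auto
    show ?thesis using nz unfolding Suc fps_nth_mult_lin qe_def
      by (simp add: qpoch_Suc field_simps power_mult_distrib)
  qed
qed

lemma sc_qe: "sc c (qe q x) = qe q (c * x)"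
  unfolding sc_def qe_def by (rule fps_ext) (simp add: power_mult_distrib)

lemma sc_sc: "sc c (sc d f) = sc (c * d) f"
  unfolding sc_def by (rule fps_ext) (simp add: power_mult_distrib)

lemma sc_add: "sc c (f + g) = sc c f + sc c g"
  unfolding sc_def by (rule fps_ext) (simp add: algebra_simps)
lemma sc_diff: "sc c (f - g) = sc c f - sc c g"
  unfolding sc_def by (rule fps_ext) (simp add: algebra_simps)
lemma sc_one: "sc c 1 = 1"
  unfolding sc_def by (rule fps_ext) simp
lemma sc_constX: "sc c (fps_const a * fps_X) = fps_const (c * a) * fps_X"
  unfolding sc_def by (rule fps_ext) (simp add: fps_X_mult_nth mult.commute[of _ fps_X] power_0_left)

lemma div2_Suc: "(Suc m * (Suc m - 1)) div 2 = m + m * (m - 1) div 2"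
proof (cases m)
  case 0 thus ?thesis by simp
next
  case (Suc k)
  have "Suc m * m = 2 * m + m * (m - 1)" using Suc by (simp add: algebra_simps)
  thus ?thesis by simp
qed

lemma qg_rec:
  assumes q0: "q \<noteq> 0" and qnr: "\<forall>n::nat. n > 0 \<longrightarrow> q ^ n \<noteq> 1"
  shows "qg q = sc q (qg q) * (1 + fps_const 1 * fps_X)"
proof (rule fps_ext)
  fix n
  show "fps_nth (qg q) n = fps_nth (sc q (qg q) * (1 + fps_const 1 * fps_X)) n"
  proof (cases n)
    case 0 thus ?thesis by (simp add: qg_def sc_def fps_nth_mult_lin2 qpoch_def)
  next
    case (Suc m)
    have nz: "qpoch q m \<noteq> 0" "1 - q ^ Suc m \<noteq> 0" using qpoch_nz[OF qnr] qnr by auto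
    have e: "q ^ (Suc m * (Suc m - 1) div 2) = q ^ m * q ^ (m * (m - 1) div 2)"
      by (simp only: div2_Suc power_add)
    have "fps_nth (sc q (qg q) * (1 + fps_const 1 * fps_X)) n
       = q ^ Suc m * (q ^ (Suc m * (Suc m - 1) div 2) / qpoch q (Suc m))
         + q ^ m * (q ^ (m * (m - 1) div 2) / qpoch q m)"
      unfolding Suc fps_nth_mult_lin2 by (simp add: qg_def sc_def)
    also have "\<dots> = q ^ (Suc m * (Suc m - 1) div 2) / qpoch q (Suc m)"
      unfolding e using nz by (simp add: qpoch_Suc field_simps)
    finally show ?thesis unfolding Suc by (simp add: qg_def)
  qed
qed


primrec PP :: "complex \<Rightarrow> complex \<Rightarrow> nat \<Rightarrow> complex fps" where
  "PP q z 0 = 1"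
| "PP q z (Suc m) = PP q z m * (1 - fps_const (q ^ m * z) * fps_X)"

definition Phi :: "complex \<Rightarrow> complex \<Rightarrow> complex \<Rightarrow> complex fps" where
  "Phi q y z = qe q y * (qe q z * qg q)"

lemma Psi_Phi: "Psi q y z = sc (1 - q) (Phi q y z)"
  unfolding Psi_def Phi_def ..

lemma Phi_shift:
  assumes qnr: "\<forall>n::nat. n > 0 \<longrightarrow> q ^ n \<noteq> 1"
  shows "Phi q y (q ^ m * z) = Phi q y z * PP q z m"
proof (induction m)
  case 0 thus ?case by simp
next
  case (Suc m)
  have "Phi q y (q ^ Suc m * z) = Phi q y (q * (q ^ m * z))" by (simp add: mult_ac)
  also have "\<dots> = Phi q y (q ^ m * z) * (1 - fps_const (q ^ m * z) * fps_X)"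
    unfolding Phi_def qe_shift[OF qnr] by (simp add: ac_simps)
  finally show ?case using Suc by (simp add: ac_simps)
qed

lemma Psi_shift:
  assumes qnr: "\<forall>n::nat. n > 0 \<longrightarrow> q ^ n \<noteq> 1"
  shows "Psi q y (q ^ m * z) = Psi q y z * sc (1 - q) (PP q z m)"
  unfolding Psi_Phi Phi_shift[OF qnr] sc_mult ..

lemma Phi_qq:
  assumes q0: "q \<noteq> 0" and qnr: "\<forall>n::nat. n > 0 \<longrightarrow> q ^ n \<noteq> 1"
  shows "Phi q (q * x) (q * w) = sc q (Phi q x w * (1 + fps_const (1 / q) * fps_X))"
proof -
  have "sc q (Phi q x w * (1 + fps_const (1 / q) * fps_X))
      = qe q (q * x) * (qe q (q * w) * (sc q (qg q) * (1 + fps_const 1 * fps_X)))"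
  proof -
    have l: "sc q (1 + fps_const (1 / q) * fps_X) = 1 + fps_const 1 * fps_X"
      unfolding sc_add sc_one sc_constX using q0 by simp
    show ?thesis unfolding Phi_def sc_mult l sc_qe by (simp add: ac_simps)
  qed
  also have "\<dots> = Phi q (q * x) (q * w)"
    unfolding Phi_def qg_rec[OF q0 qnr, symmetric] ..
  finally show ?thesis ..
qed

lemma sc_comm: "sc c (sc d f) = sc d (sc c f)"
  unfolding sc_sc by (simp add: mult.commute)

lemma Psi_qq:
  assumes q0: "q \<noteq> 0" and qnr: "\<forall>n::nat. n > 0 \<longrightarrow> q ^ n \<noteq> 1"
  shows "Psi q (q * x) (q ^ Suc m * z)
    = sc q (Psi q x z * sc (1 - q) (PP q z m * (1 + fps_const (1 / q) * fps_X)))"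
proof -
  have "Psi q (q * x) (q ^ Suc m * z) = sc (1 - q) (Phi q (q * x) (q * (q ^ m * z)))"
    unfolding Psi_Phi by (simp add: mult_ac)
  also have "\<dots> = sc q (sc (1 - q) (Phi q x z * PP q z m * (1 + fps_const (1 / q) * fps_X)))"
    unfolding Phi_qq[OF q0 qnr] Phi_shift[OF qnr] sc_comm ..
  also have "\<dots> = sc q (Psi q x z * sc (1 - q) (PP q z m * (1 + fps_const (1 / q) * fps_X)))"
    unfolding Psi_Phi sc_mult by (simp add: mult_ac)
  finally show ?thesis .
qed

lemma PP_deg: "m < j \<Longrightarrow> fps_nth (PP q z m) j = 0"
proof (induction m arbitrary: j)
  case 0 thus ?case by simp
next
  case (Suc m)
  thus ?case by (simp add: fps_nth_mult_lin)
qed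

lemma PP_top: "fps_nth (PP q z m) m = (- z) ^ m * q ^ (m * (m - 1) div 2)"
proof (induction m)
  case 0 thus ?case by simp
next
  case (Suc m)
  have e: "q ^ (Suc m * (Suc m - 1) div 2) = q ^ m * q ^ (m * (m - 1) div 2)"
    by (simp only: div2_Suc power_add)
  have "fps_nth (PP q z (Suc m)) (Suc m) = - (q ^ m * z) * fps_nth (PP q z m) m"
    by (simp add: fps_nth_mult_lin PP_deg)
  also have "\<dots> = (- z) ^ Suc m * q ^ (Suc m * (Suc m - 1) div 2)"
    unfolding Suc e by (simp only: power_Suc) (simp add: algebra_simps)
  finally show ?case .
qed

lemma cf_sc: "0 \<le> m \<Longrightarrow> cf (sc c F) m = c ^ nat m * cf F m"
  unfolding cf_def sc_def by simp

lemma cf_mult: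
  fixes F G :: "complex fps"
  assumes "\<And>j. L \<le> j \<Longrightarrow> fps_nth G j = 0"
  shows "cf (F * G) m = (\<Sum>j<L. fps_nth G j * cf F (m - int j))"
proof (cases "m < 0")
  case True thus ?thesis by (simp add: cf_def)
next
  case False
  define n where "n = nat m"
  have m: "m = int n" using False n_def by simp
  have "cf (F * G) m = fps_nth (G * F) n" by (simp add: m cf_def mult.commute)
  also have "\<dots> = (\<Sum>j=0..n. fps_nth G j * cf F (m - int j))"
    unfolding fps_mult_nth m by (intro sum.cong) (auto simp: cf_def nat_diff_distrib)
  also have "\<dots> = (\<Sum>j<n + 1 + L. fps_nth G j * cf F (m - int j))"
    by (rule sum.mono_neutral_left) (auto simp: cf_def m)
  also have "\<dots> = (\<Sum>j<L. fps_nth G j * cf F (m - int j))"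
    by (rule sum.mono_neutral_right) (auto simp: assms)
  finally show ?thesis .
qed



definition dg :: "nat \<Rightarrow> (nat \<Rightarrow> complex) \<Rightarrow> complex mat" where
  "dg N s = mat N N (\<lambda>(i,j). if i = j then s i else 0)"

lemma mult_entry:
  assumes "A \<in> carrier_mat N N" "B \<in> carrier_mat N N" "r < N" "c < N"
  shows "(A * B) $$ (r, c) = (\<Sum>k<N. A $$ (r, k) * B $$ (k, c))"
  using assms by (simp add: scalar_prod_def atLeast0LessThan)

lemma mat_fact:
  fixes F :: "complex fps" and R :: "nat \<Rightarrow> complex fps" and s :: "nat \<Rightarrow> complex"
    and nn :: "nat \<Rightarrow> int"
  assumes deg: "\<And>c j. c < N \<Longrightarrow> N \<le> j \<Longrightarrow> fps_nth (R c) j = 0"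
  shows "mat N N (\<lambda>(r,c). s r * cf (F * R c) (nn r))
    = dg N s * (mat N N (\<lambda>(r,c'). cf F (nn r - (int N - 1 - int c')))
        * mat N N (\<lambda>(c',c). fps_nth (R c) (N - 1 - c')))"
  (is "?L = dg N s * (?A * ?U)")
proof (rule eq_matI)
  fix r c assume r: "r < dim_row (dg N s * (?A * ?U))" and c: "c < dim_col (dg N s * (?A * ?U))"
  hence r: "r < N" and c: "c < N" by (auto simp: dg_def)
  have AU: "?A * ?U \<in> carrier_mat N N" by (rule mult_carrier_mat) auto
  have "(dg N s * (?A * ?U)) $$ (r, c) = (\<Sum>k<N. (dg N s) $$ (r, k) * (?A * ?U) $$ (k, c))"
    by (rule mult_entry[OF _ AU r c]) (simp add: dg_def)
  also have "\<dots> = (\<Sum>k<N. (if r = k then s r * (?A * ?U) $$ (k, c) else 0))"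
    by (rule sum.cong) (auto simp: dg_def r)
  also have "\<dots> = s r * (?A * ?U) $$ (r, c)" using r by simp
  also have "(?A * ?U) $$ (r, c) = (\<Sum>k<N. ?A $$ (r, k) * ?U $$ (k, c))"
    by (rule mult_entry[OF _ _ r c]) auto
  also have "\<dots> = (\<Sum>k<N. cf F (nn r - int (N - Suc k)) * fps_nth (R c) (N - Suc k))"
    using r c by (intro sum.cong) (auto simp: of_nat_diff algebra_simps)
  also have "\<dots> = (\<Sum>j<N. cf F (nn r - int j) * fps_nth (R c) j)"
    by (rule sum.nat_diff_reindex)
  also have "\<dots> = cf (F * R c) (nn r)"
    by (subst cf_mult[where L = N]) (auto simp: deg c mult.commute)
  finally show "?L $$ (r, c) = (dg N s * (?A * ?U)) $$ (r, c)" using r c by simp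
qed (auto simp: dg_def)

lemma det_dg: "det (dg N s) = (\<Prod>i<N. s i)"
  unfolding dg_def
  by (subst det_upper_triangular[of _ N]) (auto simp: prod_list_diag_prod atLeast0LessThan upper_triangular_def)

lemma det_lowtri:
  fixes f :: "nat \<Rightarrow> nat \<Rightarrow> complex"
  assumes "\<And>i j. i < j \<Longrightarrow> j < N \<Longrightarrow> f i j = 0"
  shows "det (mat N N (\<lambda>(i,j). f i j)) = (\<Prod>i<N. f i i)"
  by (subst det_lower_triangular[of N]) (auto simp: assms prod_list_diag_prod atLeast0LessThan)



lemma sum_id_lt: "(\<Sum>k<N. k::nat) = N * (N - 1) div 2"
proof -
  have "2 * (\<Sum>k<(N::nat). k) = N * (N - 1)"
  proof (induction N)
    case (Suc N) thus ?case by (cases N) (auto simp: algebra_simps)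
  qed simp
  thus ?thesis by simp
qed

lemma sum_tri_lt: "6 * (\<Sum>k<N. (k::nat) * (k - 1) div 2) = N * (N - 1) * (N - 2)"
proof (induction N)
  case 0 thus ?case by simp
next
  case (Suc N)
  have "even (N * (N - 1))" by (cases "even N") (auto simp: even_mult_iff)
  hence ev: "2 * (N * (N - 1) div 2) = N * (N - 1)" by simp
  have "6 * (\<Sum>k<Suc N. k * (k - 1) div 2) = N * (N - 1) * (N - 2) + 3 * (N * (N - 1))"
    using Suc ev by simp
  also have "\<dots> = Suc N * (Suc N - 1) * (Suc N - 2)"
  proof (cases N)
    case 0 thus ?thesis by simp
  next
    case (Suc K) thus ?thesis by (cases K) (auto simp: algebra_simps)
  qed
  finally show ?case .
qed

lemma sum_odd_lt: "(\<Sum>k<N. 2 * k + 1) = N * (N::nat)"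
  by (induction N) auto


lemma phi_mat: "mat N N (\<lambda>(r,c'). cf (Psi q y z) ((2 * (int N - 1 - int r) + 1) - (int N - 1 - int c')))
   = mat N N (\<lambda>(i, j). p q (int N - 2 * int i + int j) y z)"
  by (rule eq_matI) (auto simp: p_eq algebra_simps)

lemma sc_nth: "fps_nth (sc c f) j = c ^ j * fps_nth f j"
  unfolding sc_def by simp

lemma part1:
  fixes q y z :: complex and N :: nat
  assumes q0: "q \<noteq> 0"
    and qnr: "\<forall>n::nat. n > 0 \<longrightarrow> q ^ n \<noteq> 1"
  shows
   "det (mat N N (\<lambda>(r, c). p q (2 * (int N - 1 - int r) + 1) y (q ^ (N - 1 - c) * z)))
      = (q - 1) ^ (N * (N - 1) div 2) * z ^ (N * (N - 1) div 2)
        * q ^ ((N - 2) * (N - 1) * N div 6) * phi q N y z"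
proof -
  define R where "R c = sc (1 - q) (PP q z (N - 1 - c))" for c
  define A where "A = mat N N (\<lambda>(r,c'). cf (Psi q y z) ((2 * (int N - 1 - int r) + 1) - (int N - 1 - int c')))"
  define U where "U = mat N N (\<lambda>(c',c). fps_nth (R c) (N - 1 - c'))"
  have deg: "fps_nth (R c) j = 0" if "c < N" "N \<le> j" for c j
    using that by (auto simp: R_def sc_nth PP_deg)
  have "mat N N (\<lambda>(r, c). p q (2 * (int N - 1 - int r) + 1) y (q ^ (N - 1 - c) * z))
     = mat N N (\<lambda>(r,c). (\<lambda>_. 1) r * cf (Psi q y z * R c) (2 * (int N - 1 - int r) + 1))"
    by (rule eq_matI) (auto simp: p_eq Psi_shift[OF qnr] R_def)
  also have "\<dots> = dg N (\<lambda>_. 1) * (A * U)"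
    unfolding A_def U_def by (rule mat_fact) (rule deg)
  finally have M: "mat N N (\<lambda>(r, c). p q (2 * (int N - 1 - int r) + 1) y (q ^ (N - 1 - c) * z))
     = dg N (\<lambda>_. 1) * (A * U)" .
  have dA: "det A = phi q N y z" unfolding A_def phi_mat phi_def ..
  have "det U = (\<Prod>c<N. fps_nth (R c) (N - 1 - c))"
    unfolding U_def by (rule det_lowtri) (auto simp: R_def sc_nth PP_deg)
  also have "\<dots> = (\<Prod>c<N. (\<lambda>k. (1 - q) ^ k * (- z) ^ k * q ^ (k * (k - 1) div 2)) (N - Suc c))"
    by (rule prod.cong) (auto simp: R_def sc_nth PP_top mult.assoc)
  also have "\<dots> = (\<Prod>k<N. (1 - q) ^ k * (- z) ^ k * q ^ (k * (k - 1) div 2))"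
    by (rule prod.nat_diff_reindex)
  also have "\<dots> = (1 - q) ^ (\<Sum>k<N. k) * (- z) ^ (\<Sum>k<N. k) * q ^ (\<Sum>k<N. k * (k - 1) div 2)"
    by (simp only: prod.distrib power_sum)
  also have "\<dots> = ((q - 1) * z) ^ (\<Sum>k<N. k) * q ^ (\<Sum>k<N. k * (k - 1) div 2)"
  proof -
    have "(1 - q) * (- z) = (q - 1) * z" by (simp add: algebra_simps)
    thus ?thesis by (simp only: power_mult_distrib[symmetric])
  qed
  also have "\<dots> = ((q - 1) * z) ^ (N * (N - 1) div 2) * q ^ ((N - 2) * (N - 1) * N div 6)"
  proof -
    have "(\<Sum>k<N. k * (k - 1) div 2) = (N - 2) * (N - 1) * N div 6"
      using sum_tri_lt[of N] by (simp add: mult_ac)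
    thus ?thesis by (simp add: sum_id_lt)
  qed
  finally have dU: "det U = ((q - 1) * z) ^ (N * (N - 1) div 2) * q ^ ((N - 2) * (N - 1) * N div 6)" .
  have "det (dg N (\<lambda>_. 1) * (A * U)) = det (dg N (\<lambda>_. 1)) * (det A * det U)"
    by (subst det_mult[of _ N]) (auto simp: dg_def A_def U_def det_mult[of _ N])
  moreover have "(\<Prod>i<N. (\<lambda>_. 1::complex) i) = 1" by simp
  ultimately show ?thesis unfolding M dA dU det_dg by (simp only: power_mult_distrib mult_1_left mult_ac)
qed


lemma scal2:
  fixes q z :: complex
  assumes q0: "q \<noteq> 0" and N2: "N \<ge> 2"
    and E: "6 * E = (N - 1) * (N - 1 - 1) * (N - 1 - 2)"
    and T: "T = (N - 1) * (N - 1 - 1) div 2"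
  shows "q ^ (N * N) * ((1 - q) ^ (T + (N - 1)) * (1 / q) ^ (N - 1) * (- z) ^ T * q ^ E)
    = (- 1) ^ (N - 1) * (q - 1) ^ (N * (N - 1) div 2) * z ^ ((N - 1) * (N - 2) div 2)
        * q ^ (N * (N ^ 2 + 5) div 6)"
proof -
  obtain K where K: "N = K + 2" using N2 by (metis add.commute le_Suc_ex)
  have E': "6 * E = (K + 1) * K * (K - 1)" using E K by simp
  have "even ((K + 1) * K)" by simp
  hence T': "2 * T = (K + 1) * K" using T K by simp
  have TN: "T + (N - 1) = N * (N - 1) div 2"
  proof -
    have "2 * (T + (N - 1)) = N * (N - 1)" using T' K by (simp add: algebra_simps)
    thus ?thesis by simp
  qed
  have TZ: "(N - 1) * (N - 2) div 2 = T" using T K by simp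
  have h: "N * (N ^ 2 + 5) + 6 * (N - 1) = 6 * (N * N + E)"
  proof (cases K)
    case 0 thus ?thesis using K E' by (simp add: power2_eq_square)
  next
    case (Suc J)
    have "6 * E = (J + 2) * (J + 1) * J" using E' Suc by simp
    thus ?thesis using K Suc by (simp add: algebra_simps power2_eq_square)
  qed
  hence "N * (N ^ 2 + 5) = 6 * (N * N + E) - 6 * (N - 1)" by simp
  hence h2: "N * (N ^ 2 + 5) = 6 * (N * N + E - (N - 1))" by (simp add: diff_mult_distrib2)
  have "N - 1 \<le> N * N" by (metis diff_le_self le_trans le_square)
  hence X: "N * (N ^ 2 + 5) div 6 + (N - 1) = N * N + E" unfolding h2 by simp
  have Q: "q ^ (N * N) * ((1 / q) ^ (N - 1) * q ^ E) = q ^ (N * (N ^ 2 + 5) div 6)"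
  proof -
    have "q ^ (N * N) * ((1 / q) ^ (N - 1) * q ^ E) = q ^ (N * N + E) / q ^ (N - 1)"
      by (simp add: power_add power_one_over field_simps)
    also have "\<dots> = q ^ (N * (N ^ 2 + 5) div 6)"
      unfolding X[symmetric] power_add using q0 by simp
    finally show ?thesis .
  qed
  have S: "(1 - q) ^ n = (- 1) ^ n * (q - 1) ^ n" for n :: nat
    by (simp add: power_mult_distrib[symmetric])
  have S2: "(- z) ^ T = (- 1) ^ T * z ^ T" by (simp add: power_mult_distrib[symmetric])
  have P: "(- 1 :: complex) ^ (T + (N - 1)) * (- 1) ^ T = (- 1) ^ (N - 1)"
  proof -
    have "(- 1 :: complex) ^ (T + (N - 1)) * (- 1) ^ T = ((- 1) ^ T * (- 1) ^ T) * (- 1) ^ (N - 1)"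
      by (simp add: power_add mult_ac)
    also have "(- 1 :: complex) ^ T * (- 1) ^ T = 1" by (simp add: power_add[symmetric] mult_2[symmetric] power_mult)
    finally show ?thesis by simp
  qed
  have "q ^ (N * N) * ((1 - q) ^ (T + (N - 1)) * (1 / q) ^ (N - 1) * (- z) ^ T * q ^ E)
      = ((- 1 :: complex) ^ (T + (N - 1)) * (- 1) ^ T) * (q - 1) ^ (T + (N - 1)) * z ^ T
        * (q ^ (N * N) * ((1 / q) ^ (N - 1) * q ^ E))"
    unfolding S S2 by (simp add: mult_ac)
  also have "\<dots> = (- 1) ^ (N - 1) * (q - 1) ^ (N * (N - 1) div 2) * z ^ ((N - 1) * (N - 2) div 2)
        * q ^ (N * (N ^ 2 + 5) div 6)"
    unfolding P Q by (simp only: TN TZ)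
  finally show ?thesis .
qed


lemma part23:
  fixes q y z :: complex and N :: nat
  assumes q0: "q \<noteq> 0"
    and qnr: "\<forall>n::nat. n > 0 \<longrightarrow> q ^ n \<noteq> 1"
    and N2: "N \<ge> 2"
  shows
   "det (mat N N (\<lambda>(r, c). if c < N - 1
            then p q (2 * (int N - 1 - int r) + 1) y (q ^ (N - 1 - c) * z)
            else q ^ (2 * (N - 1 - r) + 1) * p q (2 * (int N - 1 - int r) + 1) (y / q) z))
      = (- 1) ^ (N - 1) * (q - 1) ^ (N * (N - 1) div 2) * z ^ ((N - 1) * (N - 2) div 2)
        * q ^ (N * (N ^ 2 + 5) div 6) * phi q N (y / q) z
   \<and> det (mat N N (\<lambda>(r, c). if c < N - 1
            then p q (2 * (int N - 1 - int r) + 1) y (q ^ (N - 1 - c) * z)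
            else q ^ (2 * (N - 1 - r) + 1) * p q (2 * (int N - 1 - int r) + 1) (y / q) (q * z)))
      = (- 1) ^ (N - 1) * (q - 1) ^ (N * (N - 1) div 2) * z ^ ((N - 1) * (N - 2) div 2)
        * q ^ (N * (N ^ 2 + 5) div 6) * (1 + q * z) * phi q N (y / q) z"
proof -
  define x where "x = y / q"
  have yx: "y = q * x" using q0 by (simp add: x_def)
  define a where "a = 1 - q"
  define nn where "nn r = 2 * (int N - 1 - int r) + 1" for r
  define s where "s r = q ^ (2 * (N - 1 - r) + 1)" for r
  define G where "G c = PP q z (N - 2 - c) * (1 + fps_const (1 / q) * fps_X)" for c
  define R2 where "R2 c = sc a (if c < N - 1 then G c else 1)" for c
  define R3 where "R3 c = sc a (if c < N - 1 then G c else PP q z 1)" for c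
  define A where "A = mat N N (\<lambda>(r,c'). cf (Psi q x z) (nn r - (int N - 1 - int c')))"
  define U2 where "U2 = mat N N (\<lambda>(c',c). fps_nth (R2 c) (N - 1 - c'))"
  define U3 where "U3 = mat N N (\<lambda>(c',c). fps_nth (R3 c) (N - 1 - c'))"
  have nnat: "nat (nn r) = 2 * (N - 1 - r) + 1" if "r < N" for r
    using that by (simp add: nn_def)
  have nnpos: "0 \<le> nn r" if "r < N" for r using that by (simp add: nn_def)
  have Gdeg: "fps_nth (G c) j = 0" if "c < N - 1" "N - 1 - c < j" for c j
    using that by (auto simp: G_def fps_nth_mult_lin2 PP_deg)
  have Gtop: "fps_nth (G c) (N - 1 - c) = (1 / q) * ((- z) ^ (N - 2 - c) * q ^ ((N - 2 - c) * (N - 2 - c - 1) div 2))"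
    if "c < N - 1" for c
  proof -
    have e: "N - 1 - c = Suc (N - 2 - c)" using that by simp
    show ?thesis unfolding e G_def fps_nth_mult_lin2 by (simp add: PP_deg PP_top)
  qed
  have E: "p q (nn r) y (q ^ (N - 1 - c) * z) = s r * cf (Psi q x z * R2 c) (nn r)"
    if "c < N - 1" "r < N" for r c
  proof -
    have e: "q ^ (N - 1 - c) * z = q ^ Suc (N - 2 - c) * z" using that
      by (simp add: Suc_diff_Suc numeral_2_eq_2)
    show ?thesis unfolding e p_eq yx Psi_qq[OF q0 qnr] using that
      by (simp add: cf_sc nnpos nnat s_def R2_def G_def a_def)
  qed
  have deg2: "fps_nth (R2 c) j = 0" if "c < N" "N \<le> j" for c j
    using that Gdeg by (auto simp: R2_def sc_nth)
  have deg3: "fps_nth (R3 c) j = 0" if "c < N" "N \<le> j" for c j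
    using that Gdeg N2 by (auto simp: R3_def sc_nth PP_deg)
  have M2: "mat N N (\<lambda>(r, c). if c < N - 1
            then p q (2 * (int N - 1 - int r) + 1) y (q ^ (N - 1 - c) * z)
            else q ^ (2 * (N - 1 - r) + 1) * p q (2 * (int N - 1 - int r) + 1) (y / q) z)
     = mat N N (\<lambda>(r,c). s r * cf (Psi q x z * R2 c) (nn r))"
  proof (rule eq_matI)
    fix r c assume "r < dim_row (mat N N (\<lambda>(r,c). s r * cf (Psi q x z * R2 c) (nn r)))"
      "c < dim_col (mat N N (\<lambda>(r,c). s r * cf (Psi q x z * R2 c) (nn r)))"
    hence rc: "r < N" "c < N" by auto
    show "mat N N (\<lambda>(r, c). if c < N - 1
            then p q (2 * (int N - 1 - int r) + 1) y (q ^ (N - 1 - c) * z)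
            else q ^ (2 * (N - 1 - r) + 1) * p q (2 * (int N - 1 - int r) + 1) (y / q) z) $$ (r, c)
       = mat N N (\<lambda>(r,c). s r * cf (Psi q x z * R2 c) (nn r)) $$ (r, c)"
    proof (cases "c < N - 1")
      case True
      thus ?thesis using rc E[OF True rc(1)] by (simp add: nn_def)
    next
      case False
      thus ?thesis using rc
        by (simp add: p_eq R2_def s_def nn_def x_def sc_one)
    qed
  qed auto
  also have "\<dots> = dg N s * (A * U2)"
    unfolding A_def U2_def by (rule mat_fact) (rule deg2)
  finally have M2: "mat N N (\<lambda>(r, c). if c < N - 1
            then p q (2 * (int N - 1 - int r) + 1) y (q ^ (N - 1 - c) * z)
            else q ^ (2 * (N - 1 - r) + 1) * p q (2 * (int N - 1 - int r) + 1) (y / q) z)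
     = dg N s * (A * U2)" .
  have M3: "mat N N (\<lambda>(r, c). if c < N - 1
            then p q (2 * (int N - 1 - int r) + 1) y (q ^ (N - 1 - c) * z)
            else q ^ (2 * (N - 1 - r) + 1) * p q (2 * (int N - 1 - int r) + 1) (y / q) (q * z))
     = mat N N (\<lambda>(r,c). s r * cf (Psi q x z * R3 c) (nn r))"
  proof (rule eq_matI)
    fix r c assume "r < dim_row (mat N N (\<lambda>(r,c). s r * cf (Psi q x z * R3 c) (nn r)))"
      "c < dim_col (mat N N (\<lambda>(r,c). s r * cf (Psi q x z * R3 c) (nn r)))"
    hence rc: "r < N" "c < N" by auto
    show "mat N N (\<lambda>(r, c). if c < N - 1
            then p q (2 * (int N - 1 - int r) + 1) y (q ^ (N - 1 - c) * z)
            else q ^ (2 * (N - 1 - r) + 1) * p q (2 * (int N - 1 - int r) + 1) (y / q) (q * z)) $$ (r, c)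
       = mat N N (\<lambda>(r,c). s r * cf (Psi q x z * R3 c) (nn r)) $$ (r, c)"
    proof (cases "c < N - 1")
      case True
      thus ?thesis using rc E[OF True rc(1)] by (simp add: R2_def R3_def nn_def)
    next
      case False
      have ps: "Psi q x (q * z) = Psi q x z * R3 c" using Psi_shift[OF qnr, of x 1 z] False
        by (simp add: R3_def a_def)
      show ?thesis using rc False
        by (simp add: p_eq s_def nn_def ps[unfolded x_def] x_def)
    qed
  qed auto
  also have "\<dots> = dg N s * (A * U3)"
    unfolding A_def U3_def by (rule mat_fact) (rule deg3)
  finally have M3: "mat N N (\<lambda>(r, c). if c < N - 1
            then p q (2 * (int N - 1 - int r) + 1) y (q ^ (N - 1 - c) * z)
            else q ^ (2 * (N - 1 - r) + 1) * p q (2 * (int N - 1 - int r) + 1) (y / q) (q * z))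
     = dg N s * (A * U3)" .
  have dA: "det A = phi q N x z" unfolding A_def nn_def phi_mat phi_def ..
  have ds: "det (dg N s) = q ^ (N * N)"
  proof -
    have "det (dg N s) = (\<Prod>r<N. (\<lambda>k. q ^ (2 * k + 1)) (N - Suc r))"
      unfolding det_dg s_def by simp
    also have "\<dots> = (\<Prod>k<N. q ^ (2 * k + 1))" by (rule prod.nat_diff_reindex)
    also have "\<dots> = q ^ (N * N)" unfolding power_sum[symmetric] sum_odd_lt ..
    finally show ?thesis .
  qed
  define T where "T = (\<Sum>m<N - 1. m)"
  define EE where "EE = (\<Sum>m<N - 1. m * (m - 1) div 2)"
  have dU2: "det U2 = (1 - q) ^ (T + (N - 1)) * (1 / q) ^ (N - 1) * (- z) ^ T * q ^ EE"
  proof -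
    have "det U2 = (\<Prod>c<N. fps_nth (R2 c) (N - 1 - c))"
      unfolding U2_def
    proof (rule det_lowtri)
      fix i j assume ij: "i < j" "j < N"
      show "fps_nth (R2 j) (N - 1 - i) = 0"
      proof (cases "j < N - 1")
        case True thus ?thesis using ij Gdeg[OF True] by (simp add: R2_def sc_nth)
      next
        case False thus ?thesis using ij by (simp add: R2_def sc_nth)
      qed
    qed
    also have "\<dots> = (\<Prod>c<Suc (N - 1). fps_nth (R2 c) (N - 1 - c))" using N2 by simp
    also have "\<dots> = (\<Prod>c<N - 1. fps_nth (R2 c) (N - 1 - c))"
      by (simp add: R2_def sc_nth)
    also have "\<dots> = (\<Prod>c<N - 1. (\<lambda>m. a ^ Suc m * ((1 / q) * ((- z) ^ m * q ^ (m * (m - 1) div 2)))) (N - 1 - Suc c))"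
    proof (rule prod.cong)
      fix c assume "c \<in> {..<N - 1}"
      hence c: "c < N - 1" by simp
      have e: "N - 1 - c = Suc (N - 1 - Suc c)" "N - 2 - c = N - 1 - Suc c" using c by auto
      show "fps_nth (R2 c) (N - 1 - c) = (\<lambda>m. a ^ Suc m * ((1 / q) * ((- z) ^ m * q ^ (m * (m - 1) div 2)))) (N - 1 - Suc c)"
        using Gtop[OF c] c unfolding R2_def sc_nth by (simp only: e if_True)
    qed simp
    also have "\<dots> = (\<Prod>m<N - 1. a ^ Suc m * ((1 / q) * ((- z) ^ m * q ^ (m * (m - 1) div 2))))"
      by (rule prod.nat_diff_reindex)
    also have "\<dots> = a ^ (\<Sum>m<N - 1. Suc m) * (1 / q) ^ (N - 1) * (- z) ^ T * q ^ EE"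
    proof -
      have "(\<Prod>m<N - 1. a ^ Suc m * ((1 / q) * ((- z) ^ m * q ^ (m * (m - 1) div 2))))
        = (\<Prod>m<N - 1. a ^ Suc m) * (\<Prod>m<N - 1. 1 / q) * (\<Prod>m<N - 1. (- z) ^ m) * (\<Prod>m<N - 1. q ^ (m * (m - 1) div 2))"
        by (simp only: prod.distrib[symmetric]) (rule prod.cong, simp, simp only: mult_ac)
      thus ?thesis unfolding T_def EE_def power_sum by simp
    qed
    also have "(\<Sum>m<N - 1. Suc m) = T + (N - 1)"
    proof -
      have "(\<Sum>m<N - 1. Suc m) = (\<Sum>m<N - 1. m + 1)" by simp
      also have "\<dots> = T + (N - 1)" unfolding T_def sum.distrib by simp
      finally show ?thesis .
    qed
    finally show ?thesis unfolding a_def .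
  qed
  have T: "T = (N - 1) * (N - 1 - 1) div 2" unfolding T_def sum_id_lt ..
  have EE: "6 * EE = (N - 1) * (N - 1 - 1) * (N - 1 - 2)" unfolding EE_def sum_tri_lt ..
  have res2: "det (dg N s * (A * U2)) = (- 1) ^ (N - 1) * (q - 1) ^ (N * (N - 1) div 2) * z ^ ((N - 1) * (N - 2) div 2)
        * q ^ (N * (N ^ 2 + 5) div 6) * phi q N (y / q) z"
  proof -
    have "det (dg N s * (A * U2)) = det (dg N s) * (det A * det U2)"
      by (subst det_mult[of _ N]) (auto simp: dg_def A_def U2_def det_mult[of _ N])
    also have "\<dots> = (q ^ (N * N) * ((1 - q) ^ (T + (N - 1)) * (1 / q) ^ (N - 1) * (- z) ^ T * q ^ EE)) * phi q N x z"
      unfolding ds dA dU2 by (simp add: mult_ac)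
    also have "\<dots> = (- 1) ^ (N - 1) * (q - 1) ^ (N * (N - 1) div 2) * z ^ ((N - 1) * (N - 2) div 2)
        * q ^ (N * (N ^ 2 + 5) div 6) * phi q N (y / q) z"
      unfolding scal2[OF q0 N2 EE T] x_def ..
    finally show ?thesis .
  qed
  define W where "W = mat N N (\<lambda>(i,j). if i = j then (if j = N - 1 then 1 + q * z else 1)
      else if i = N - 2 \<and> j = N - 1 then - (q * z) else 0)"
  have dW: "det W = 1 + q * z"
  proof -
    have "det W = (\<Prod>i\<in>{0..<N}. if i = N - 1 then 1 + q * z else 1)"
      unfolding W_def
      by (subst det_upper_triangular[of _ N]) (auto simp: prod_list_diag_prod upper_triangular_def intro!: prod.cong)
    also have "\<dots> = 1 + q * z" using N2 by (simp add: prod.delta)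
    finally show ?thesis .
  qed
  have key: "(1 + q * z) * fps_nth (R2 (N - 1)) j - q * z * fps_nth (R2 (N - 2)) j = fps_nth (R3 (N - 1)) j" for j
  proof -
    have "N - 2 < N - 1" using N2 by simp
    hence e1: "fps_nth (R2 (N - 2)) j = a ^ j * fps_nth (1 + fps_const (1 / q) * fps_X) j"
      by (simp add: R2_def sc_nth G_def)
    have e2: "fps_nth (R3 (N - 1)) j = a ^ j * fps_nth (1 - fps_const z * fps_X) j"
      by (simp add: R3_def sc_nth)
    have e3: "fps_nth (R2 (N - 1)) j = a ^ j * fps_nth 1 j" by (simp add: R2_def sc_nth)
    show ?thesis unfolding e1 e2 e3 using q0
      by (cases j; cases "j - 1") (auto simp: fps_X_mult_nth field_simps a_def)
  qed
  have UW: "U2 * W = U3"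
  proof (rule eq_matI)
    fix i j assume "i < dim_row U3" "j < dim_col U3"
    hence ij: "i < N" "j < N" by (auto simp: U3_def)
    have "(U2 * W) $$ (i, j) = (\<Sum>k<N. U2 $$ (i, k) * W $$ (k, j))"
      by (rule mult_entry[OF _ _ ij]) (auto simp: U2_def W_def)
    also have "\<dots> = U3 $$ (i, j)"
    proof (cases "j = N - 1")
      case False
      have "(\<Sum>k<N. U2 $$ (i, k) * W $$ (k, j)) = (\<Sum>k<N. if k = j then U2 $$ (i, k) else 0)"
        using False ij by (intro sum.cong) (auto simp: W_def)
      also have "\<dots> = U3 $$ (i, j)"
      proof -
        have "j < N - 1" using False ij by simp
        thus ?thesis using ij by (simp add: U2_def U3_def R2_def R3_def)
      qed
      finally show ?thesis .
    next
      case True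
      have "(\<Sum>k<N. U2 $$ (i, k) * W $$ (k, j))
          = (\<Sum>k<N. (if k = N - 1 then U2 $$ (i, k) * (1 + q * z) else 0)
                     + (if k = N - 2 then U2 $$ (i, k) * (- (q * z)) else 0))"
        using True ij N2 by (intro sum.cong) (auto simp: W_def)
      also have "\<dots> = U2 $$ (i, N - 1) * (1 + q * z) + U2 $$ (i, N - 2) * (- (q * z))"
        using N2 by (simp add: sum.distrib)
      also have "\<dots> = U3 $$ (i, j)" using True ij N2 key[of "N - 1 - i"]
        by (simp add: U2_def U3_def algebra_simps)
      finally show ?thesis .
    qed
    finally show "(U2 * W) $$ (i, j) = U3 $$ (i, j)" .
  qed (auto simp: U2_def U3_def W_def)
  have res3: "det (dg N s * (A * U3)) = det (dg N s * (A * U2)) * (1 + q * z)"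
  proof -
    have C: "dg N s \<in> carrier_mat N N" "A \<in> carrier_mat N N" "U2 \<in> carrier_mat N N" "W \<in> carrier_mat N N"
      by (auto simp: dg_def A_def U2_def W_def)
    have "det (dg N s * (A * U3)) = det (dg N s) * (det A * (det U2 * det W))"
      unfolding UW[symmetric] using C by (simp add: det_mult[of _ N])
    also have "det (dg N s * (A * U2)) = det (dg N s) * (det A * det U2)"
      using C by (simp add: det_mult[of _ N])
    ultimately show ?thesis unfolding dW by (simp add: mult_ac)
  qed
  show ?thesis unfolding M2 M3 res3 res2 by (simp add: mult_ac)
qed

theorem lemma2:
  fixes q y z :: complex and N :: nat
  assumes q0: "q \<noteq> 0"
    and qnr: "\<forall>n::nat. n > 0 \<longrightarrow> q ^ n \<noteq> 1"
    and N2: "N \<ge> 2"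
  shows
   "(det (mat N N (\<lambda>(r, c). p q (2 * (int N - 1 - int r) + 1) y (q ^ (N - 1 - c) * z)))
      = (q - 1) ^ (N * (N - 1) div 2) * z ^ (N * (N - 1) div 2)
        * q ^ ((N - 2) * (N - 1) * N div 6) * phi q N y z)
   \<and> (det (mat N N (\<lambda>(r, c). if c < N - 1
            then p q (2 * (int N - 1 - int r) + 1) y (q ^ (N - 1 - c) * z)
            else q ^ (2 * (N - 1 - r) + 1) * p q (2 * (int N - 1 - int r) + 1) (y / q) z))
      = (- 1) ^ (N - 1) * (q - 1) ^ (N * (N - 1) div 2) * z ^ ((N - 1) * (N - 2) div 2)
        * q ^ (N * (N ^ 2 + 5) div 6) * phi q N (y / q) z)
   \<and> (det (mat N N (\<lambda>(r, c). if c < N - 1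
            then p q (2 * (int N - 1 - int r) + 1) y (q ^ (N - 1 - c) * z)
            else q ^ (2 * (N - 1 - r) + 1) * p q (2 * (int N - 1 - int r) + 1) (y / q) (q * z)))
      = (- 1) ^ (N - 1) * (q - 1) ^ (N * (N - 1) div 2) * z ^ ((N - 1) * (N - 2) div 2)
        * q ^ (N * (N ^ 2 + 5) div 6) * (1 + q * z) * phi q N (y / q) z)"
  proof -
  note a = part1[OF q0 qnr, of N y z]
  note b = part23[OF q0 qnr N2, of y z]
  show ?thesis by (rule conjI[OF a b])
qed

end
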